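(* Let $G$ be a mixed abelian group with torsion subgroup $T$. Let $A$ be a direct summand of $G$ containing a subgroup $N$ as an essential subgroup. Suppose $G = H \oplus K$ is a decomposition with $N \subseteq H$, and let $\pi: G \to H$ be the standard projection along $K$. Then the restriction of $\pi$ to $A$ is injective, and $\pi(A)$ is a direct summand of $G$ and also a direct summand of $H$.
   Context: All groups are additively written abelian groups; a mixed group is one containing both non-zero elements of finite order and elements of infinite order. A subgroup $N$ of a group $A$ is essential in $A$ if $N \cap S \neq \{0\}$ for every non-zero subgroup $S$ of $A$. *)

theory Defs
  imports Main
begin

text \<open>The ambient abelian group G is the whole carrier (UNIV) of a type of class ab_group_add.\<close>

definition subgrp :: "'a::ab_group_add set \<Rightarrow> bool" where
  "subgrp S \<longleftrightarrow> 0 \<in> S \<and> (\<forall>x\<in>S. \<forall>y\<in>S. x + y \<in> S) \<and> (\<forall>x\<in>S. - x \<in> S)"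

definition sumset :: "'a::ab_group_add set \<Rightarrow> 'a set \<Rightarrow> 'a set" where
  "sumset A B = {a + b | a b. a \<in> A \<and> b \<in> B}"

definition int_direct_sum :: "'a::ab_group_add set \<Rightarrow> 'a set \<Rightarrow> 'a set \<Rightarrow> bool" where
  "int_direct_sum S H K \<longleftrightarrow> subgrp H \<and> subgrp K \<and> H \<inter> K = {0} \<and> sumset H K = S"

definition direct_summand :: "'a::ab_group_add set \<Rightarrow> 'a set \<Rightarrow> bool" where
  "direct_summand A S \<longleftrightarrow> (\<exists>B. int_direct_sum S A B)"

definition essential_in :: "'a::ab_group_add set \<Rightarrow> 'a set \<Rightarrow> bool" where
  "essential_in N A \<longleftrightarrow> subgrp N \<and> N \<subseteq> A \<and>
     (\<forall>S. subgrp S \<and> S \<subseteq> A \<and> S \<noteq> {0} \<longrightarrow> N \<inter> S \<noteq> {0})"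

definition nmul :: "nat \<Rightarrow> 'a::ab_group_add \<Rightarrow> 'a" where
  "nmul n x = (((+) x) ^^ n) 0"

definition torsion_part :: "'a::ab_group_add set" where
  "torsion_part = {x. \<exists>n>0. nmul n x = 0}"

definition mixed_group :: "'a::ab_group_add itself \<Rightarrow> bool" where
  "mixed_group _ \<longleftrightarrow> (\<exists>x::'a. x \<noteq> 0 \<and> x \<in> torsion_part) \<and> (\<exists>y::'a. y \<notin> torsion_part)"

definition proj :: "'a::ab_group_add set \<Rightarrow> 'a set \<Rightarrow> 'a \<Rightarrow> 'a" where
  "proj H K g = (THE h. h \<in> H \<and> g - h \<in> K)"

end

theory Submission
  imports Defs
begin

lemma subgrp_diff: "subgrp S \<Longrightarrow> x \<in> S \<Longrightarrow> y \<in> S \<Longrightarrow> x - y \<in> S"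
  unfolding subgrp_def by (metis diff_conv_add_uminus)

lemma subgrp_0: "subgrp S \<Longrightarrow> 0 \<in> S" unfolding subgrp_def by blast
lemma subgrp_add: "subgrp S \<Longrightarrow> x \<in> S \<Longrightarrow> y \<in> S \<Longrightarrow> x + y \<in> S" unfolding subgrp_def by blast
lemma subgrp_neg: "subgrp S \<Longrightarrow> x \<in> S \<Longrightarrow> - x \<in> S" unfolding subgrp_def by blast

lemma idsD:
  assumes "int_direct_sum S H K"
  shows "subgrp H" "subgrp K" "H \<inter> K = {0}" "sumset H K = S"
proof -
  have d: "subgrp H \<and> subgrp K \<and> H \<inter> K = {0} \<and> sumset H K = S"
    using assms unfolding int_direct_sum_def .
  show "subgrp H" using d by blast
  show "subgrp K" using d by blast
  show "H \<inter> K = {0}" using d by blast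
  show "sumset H K = S" using d by blast
qed

lemma mem_eq: "x \<in> S \<Longrightarrow> x = y \<Longrightarrow> y \<in> S" by simp

lemma proj_ex:
  assumes "int_direct_sum (UNIV :: 'a::ab_group_add set) H K"
  shows "proj H K g \<in> H \<and> g - proj H K g \<in> K"
proof -
  have sH: "subgrp H" and sK: "subgrp K" and I: "H \<inter> K = {0}" and S: "sumset H K = UNIV"
    using idsD[OF assms(1)] by simp_all
  have "g \<in> sumset H K" using S by simp
  then obtain h k where hk: "h \<in> H" "k \<in> K" "g = h + k" unfolding sumset_def by blast
  have ex: "\<exists>!h. h \<in> H \<and> g - h \<in> K"
  proof
    show "h \<in> H \<and> g - h \<in> K" using hk by simp
  next
    fix h' assume h': "h' \<in> H \<and> g - h' \<in> K"
    have hH: "h' - h \<in> H" using subgrp_diff[OF sH conjunct1[OF h'] hk(1)] .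
    have gk: "g - h \<in> K" using hk(2,3) by simp
    have "(g - h) - (g - h') \<in> K" using subgrp_diff[OF sK gk conjunct2[OF h']] .
    hence hK: "h' - h \<in> K" by (rule mem_eq) simp
    have "h' - h = 0" using hH hK I by blast
    thus "h' = h" by simp
  qed
  show ?thesis unfolding proj_def by (rule theI'[OF ex])
qed

lemma proj_unique:
  assumes "int_direct_sum (UNIV :: 'a::ab_group_add set) H K" "h \<in> H" "g - h \<in> K"
  shows "proj H K g = h"
proof -
  have sH: "subgrp H" and sK: "subgrp K" and I: "H \<inter> K = {0}"
    using idsD[OF assms(1)] by simp_all
  have p: "proj H K g \<in> H" "g - proj H K g \<in> K" using proj_ex[OF assms(1)] by auto
  have "proj H K g - h \<in> H" using subgrp_diff[OF sH] p assms by blast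
  moreover have "(g - h) - (g - proj H K g) \<in> K" using subgrp_diff[OF sK] p assms by blast
  hence "proj H K g - h \<in> K" by (rule mem_eq) simp
  ultimately have "proj H K g - h = 0" using I by blast
  thus ?thesis by simp
qed

lemma proj_add:
  assumes "int_direct_sum (UNIV :: 'a::ab_group_add set) H K"
  shows "proj H K (x + y) = proj H K x + proj H K y"
proof (rule proj_unique[OF assms])
  have sH: "subgrp H" and sK: "subgrp K" using idsD[OF assms(1)] by simp_all
  note px = proj_ex[OF assms, of x] and py = proj_ex[OF assms, of y]
  show "proj H K x + proj H K y \<in> H" using subgrp_add[OF sH] px py by blast
  have "(x - proj H K x) + (y - proj H K y) \<in> K" using subgrp_add[OF sK] px py by blast
  thus "x + y - (proj H K x + proj H K y) \<in> K" by (rule mem_eq) simp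
qed

lemma proj_id:
  assumes "int_direct_sum (UNIV :: 'a::ab_group_add set) H K" "h \<in> H"
  shows "proj H K h = h"
  by (rule proj_unique[OF assms]) (simp add: subgrp_0 idsD(2)[OF assms(1)])

lemma nmul_0[simp]: "nmul 0 x = 0" unfolding nmul_def by simp
lemma nmul_Suc: "nmul (Suc n) x = x + nmul n x" unfolding nmul_def by simp
lemma nmul_1[simp]: "nmul 1 x = x" by (simp add: nmul_Suc)
lemma nmul_add: "nmul (a + b) x = nmul a x + nmul b x"
  by (induct a) (simp_all add: nmul_Suc add.assoc)
lemma nmul_zero[simp]: "nmul n (0::'a::ab_group_add) = 0"
  by (induct n) (simp_all add: nmul_Suc)
lemma nmul_mult: "nmul m x = 0 \<Longrightarrow> nmul (m * q) x = 0"
  by (induct q) (simp_all add: nmul_add)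
lemma nmul_mod: "nmul m x = 0 \<Longrightarrow> nmul j x = nmul (j mod m) x"
proof -
  assume a: "nmul m x = 0"
  have "j = m * (j div m) + j mod m" by simp
  hence "nmul j x = nmul (m * (j div m)) x + nmul (j mod m) x" by (metis nmul_add)
  thus ?thesis using nmul_mult[OF a] by simp
qed
lemma nmul_hom:
  assumes "\<And>x y. f (x + y) = f x + f y"
  shows "f (nmul n x) = nmul n (f x)"
proof -
  have f0: "f 0 = (0::'b::ab_group_add)" using assms[of 0 0] by simp
  show ?thesis by (induct n) (simp_all add: nmul_Suc assms f0)
qed
lemma nmul_in: "subgrp S \<Longrightarrow> x \<in> S \<Longrightarrow> nmul n x \<in> S"
  by (induct n) (simp_all add: nmul_Suc subgrp_0 subgrp_add)

definition Zs :: "'a::ab_group_add \<Rightarrow> 'a set" where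
  "Zs y = {nmul n y | n. True} \<union> {- nmul n y | n. True}"

lemma Zs_subgrp: "subgrp (Zs y)"
  unfolding subgrp_def
proof (intro conjI ballI)
  show "0 \<in> Zs y" unfolding Zs_def by (auto intro: exI[of _ 0])
next
  fix x assume "x \<in> Zs y" thus "- x \<in> Zs y" unfolding Zs_def by auto
next
  fix x z assume x: "x \<in> Zs y" and z: "z \<in> Zs y"
  have L: "nmul a y + - nmul b y \<in> Zs y" for a b
  proof (cases "b \<le> a")
    case True
    hence "nmul a y = nmul (a - b) y + nmul b y" by (metis le_add_diff_inverse2 nmul_add)
    thus ?thesis unfolding Zs_def by auto
  next
    case False
    hence "nmul b y = nmul (b - a) y + nmul a y" by (metis nat_le_linear le_add_diff_inverse2 nmul_add)
    hence "nmul a y + - nmul b y = - nmul (b - a) y" by (simp add: algebra_simps)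
    thus ?thesis unfolding Zs_def by blast
  qed
  from x z show "x + z \<in> Zs y"
  proof (unfold Zs_def, elim UnE CollectE exE conjE)
    fix a b assume "x = nmul a y" "z = nmul b y"
    thus "x + z \<in> {nmul n y |n. True} \<union> {- nmul n y |n. True}" by (auto simp: nmul_add[symmetric])
  next
    fix a b assume "x = nmul a y" "z = - nmul b y"
    thus "x + z \<in> {nmul n y |n. True} \<union> {- nmul n y |n. True}" using L unfolding Zs_def by auto
  next
    fix a b assume "x = - nmul a y" "z = nmul b y"
    thus "x + z \<in> {nmul n y |n. True} \<union> {- nmul n y |n. True}" using L[of b a] unfolding Zs_def
      by (auto simp: add.commute)
  next
    fix a b assume "x = - nmul a y" "z = - nmul b y"
    hence "x + z = - nmul (a + b) y" by (simp add: nmul_add)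
    thus "x + z \<in> {nmul n y |n. True} \<union> {- nmul n y |n. True}" by blast
  qed
qed

lemma ess_mult:
  assumes "essential_in N A" "subgrp A" "y \<in> A" "y \<noteq> 0"
  shows "\<exists>n>0. nmul n y \<in> N \<and> nmul n y \<noteq> 0"
proof -
  have sN: "subgrp N"
    and E: "\<And>S. subgrp S \<Longrightarrow> S \<subseteq> A \<Longrightarrow> S \<noteq> {0} \<Longrightarrow> N \<inter> S \<noteq> {0}"
    using assms(1) unfolding essential_in_def by auto
  have "Zs y \<subseteq> A" unfolding Zs_def using nmul_in[OF assms(2,3)] subgrp_neg[OF assms(2)] by auto
  moreover have "y \<in> Zs y" unfolding Zs_def by (metis (mono_tags, lifting) UnCI mem_Collect_eq nmul_1)
  hence "Zs y \<noteq> {0}" using assms(4) by auto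
  ultimately have "N \<inter> Zs y \<noteq> {0}" using E Zs_subgrp by blast
  moreover have "0 \<in> N \<inter> Zs y" using subgrp_0[OF sN] subgrp_0[OF Zs_subgrp] by blast
  ultimately obtain z where z: "z \<in> N" "z \<in> Zs y" "z \<noteq> 0" by blast
  then obtain n where "z = nmul n y \<or> z = - nmul n y" unfolding Zs_def by blast
  hence "nmul n y \<in> N" "nmul n y \<noteq> 0" using z subgrp_neg[OF sN, of z] by auto
  moreover hence "n > 0" by (metis gr0I nmul_0)
  ultimately show ?thesis by blast
qed

lemma ess_tors:
  assumes "essential_in N A" "subgrp A" "y \<in> A" "y \<noteq> 0" "m > 0" "nmul m y = 0"
  shows "\<exists>d>0. d < m \<and> nmul d y \<in> N"
proof -
  obtain n where n: "nmul n y \<in> N" "nmul n y \<noteq> 0" using ess_mult[OF assms(1-4)] by blast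
  have e: "nmul n y = nmul (n mod m) y" using nmul_mod[OF assms(6)] .
  have "n mod m \<noteq> 0" using n e by (metis nmul_0)
  moreover have "n mod m < m" using assms(5) by simp
  ultimately show ?thesis using n e by auto
qed

theorem lemma2p4:
  fixes A N H K :: "'a::ab_group_add set"
  assumes "mixed_group TYPE('a)"
    and "direct_summand A (UNIV :: 'a set)"
    and "essential_in N A"
    and "int_direct_sum (UNIV :: 'a set) H K"
    and "N \<subseteq> H"
  shows "inj_on (proj H K) A \<and> direct_summand (proj H K ` A) (UNIV :: 'a set)
           \<and> direct_summand (proj H K ` A) H"
proof -
  obtain B where AB: "int_direct_sum UNIV A B" using assms(2) unfolding direct_summand_def by blast
  note HK = assms(4)
  have sA: "subgrp A" and sB: "subgrp B" and IAB: "A \<inter> B = {0}" using idsD[OF AB] by simp_all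
  have sH: "subgrp H" and sK: "subgrp K" and IHK: "H \<inter> K = {0}" using idsD[OF HK] by simp_all
  have sN: "subgrp N" and NA: "N \<subseteq> A"
    and E: "\<And>S. subgrp S \<Longrightarrow> S \<subseteq> A \<Longrightarrow> S \<noteq> {0} \<Longrightarrow> N \<inter> S \<noteq> {0}"
    using assms(3) unfolding essential_in_def by auto
  have E': "S = {0}" if "subgrp S" "S \<subseteq> A" "N \<inter> S \<subseteq> {0}" for S
  proof -
    have "0 \<in> N \<inter> S" using subgrp_0 that(1) sN by blast
    thus ?thesis using E[OF that(1,2)] that(3) by blast
  qed
  define pi where "pi = proj H K"
  define pA where "pA = proj A B"
  define psi where "psi = (\<lambda>a. pA (a - pi a))"
  have piadd: "pi (x + y) = pi x + pi y" for x y unfolding pi_def using proj_add[OF HK] .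
  have pAadd: "pA (x + y) = pA x + pA y" for x y unfolding pA_def using proj_add[OF AB] .
  have pi0: "pi 0 = 0" using piadd[of 0 0] by simp
  have pineg: "pi (- x) = - pi x" for x using piadd[of x "- x"] pi0 by (metis add_eq_0_iff)
  have pidiff: "pi (x - y) = pi x - pi y" for x y using piadd[of x "- y"] pineg[of y] by simp
  have pA0: "pA 0 = 0" using pAadd[of 0 0] by simp
  have pAneg: "pA (- x) = - pA x" for x using pAadd[of x "- x"] pA0 by (metis add_eq_0_iff)
  have pAdiff: "pA (x - y) = pA x - pA y" for x y using pAadd[of x "- y"] pAneg[of y] by simp
  have psiadd: "psi (x + y) = psi x + psi y" for x y
  proof -
    have e: "x + y - pi (x+y) = (x - pi x) + (y - pi y)" by (simp add: piadd)
    show ?thesis unfolding psi_def e by (rule pAadd)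
  qed
  have piH: "pi x \<in> H" and piK: "x - pi x \<in> K" for x using proj_ex[OF HK] unfolding pi_def by auto
  have pAA: "pA x \<in> A" and pAB: "x - pA x \<in> B" for x using proj_ex[OF AB] unfolding pA_def by auto
  have psiA: "psi x \<in> A" for x unfolding psi_def using pAA .
  have psiN: "psi n = 0" if "n \<in> N" for n
  proof -
    have "pi n = n" unfolding pi_def using proj_id[OF HK] that assms(5) by blast
    thus ?thesis unfolding psi_def using pA0 by simp
  qed
  have tors: "\<forall>t\<in>A. m > 0 \<longrightarrow> nmul m t = 0 \<longrightarrow> (\<exists>a\<in>A. t = a - psi a)" for m
  proof (induction m rule: less_induct)
    case (less m)
    show ?case
    proof (intro ballI impI)
      fix t assume t: "t \<in> A" "m > 0" "nmul m t = 0"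
      show "\<exists>a\<in>A. t = a - psi a"
      proof (cases "t = 0")
        case True
        thus ?thesis using subgrp_0[OF sA] psiN[OF subgrp_0[OF sN]] by (intro bexI[of _ 0]) auto
      next
        case False
        obtain d where d: "d > 0" "d < m" "nmul d t \<in> N" using ess_tors[OF assms(3) sA t(1) False t(2,3)] by blast
        have "nmul d (psi t) = psi (nmul d t)" by (rule nmul_hom[OF psiadd, symmetric])
        hence "nmul d (psi t) = 0" using psiN[OF d(3)] by simp
        then obtain a where a: "a \<in> A" "psi t = a - psi a" using less.IH[OF d(2)] psiA d(1) by blast
        have "t = (t + a) - psi (t + a)" using a(2) by (simp add: psiadd algebra_simps)
        thus ?thesis using subgrp_add[OF sA t(1) a(1)] by blast
      qed
    qed
  qed
  have surj: "\<exists>a\<in>A. y = a - psi a" if y: "y \<in> A" for y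
  proof (cases "y = 0")
    case True
    thus ?thesis using subgrp_0[OF sA] psiN[OF subgrp_0[OF sN]] by (intro bexI[of _ 0]) auto
  next
    case False
    obtain n where n: "n > 0" "nmul n y \<in> N" using ess_mult[OF assms(3) sA y False] by blast
    have "nmul n (psi y) = psi (nmul n y)" by (rule nmul_hom[OF psiadd, symmetric])
    hence "nmul n (psi y) = 0" using psiN[OF n(2)] by simp
    then obtain a where a: "a \<in> A" "psi y = a - psi a" using tors psiA n(1) by blast
    have "y = (y + a) - psi (y + a)" using a(2) by (simp add: psiadd algebra_simps)
    thus ?thesis using subgrp_add[OF sA y a(1)] by blast
  qed
  have AK: "A \<inter> K = {0}"
  proof (rule E')
    show "subgrp (A \<inter> K)" using sA sK unfolding subgrp_def by auto
    show "A \<inter> K \<subseteq> A" by blast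
    show "N \<inter> (A \<inter> K) \<subseteq> {0}" using assms(5) IHK by blast
  qed
  have inj: "inj_on pi A"
  proof (rule inj_onI)
    fix x y assume xy: "x \<in> A" "y \<in> A" "pi x = pi y"
    have "x - y - pi (x - y) \<in> K" by (rule piK)
    hence "x - y \<in> K" using xy(3) pidiff by simp
    moreover have "x - y \<in> A" using subgrp_diff[OF sA xy(1,2)] .
    ultimately have "x - y = 0" using AK by blast
    thus "x = y" by simp
  qed
  have S0: "{a \<in> A. pi a \<in> B} = {0}"
  proof (rule E')
    show "subgrp {a \<in> A. pi a \<in> B}" using sA sB unfolding subgrp_def by (auto simp: pi0 piadd pineg)
    show "{a \<in> A. pi a \<in> B} \<subseteq> A" by blast
    show "N \<inter> {a \<in> A. pi a \<in> B} \<subseteq> {0}"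
    proof
      fix n assume "n \<in> N \<inter> {a \<in> A. pi a \<in> B}"
      moreover hence "pi n = n" unfolding pi_def using proj_id[OF HK] assms(5) by blast
      ultimately show "n \<in> {0}" using IAB NA by auto
    qed
  qed
  have sP: "subgrp (pi ` A)"
    unfolding subgrp_def
  proof (intro conjI ballI)
    show "0 \<in> pi ` A" using pi0 subgrp_0[OF sA] by (metis image_eqI)
  next
    fix x y assume "x \<in> pi ` A" "y \<in> pi ` A"
    then obtain a b where "a \<in> A" "b \<in> A" "x = pi a" "y = pi b" by blast
    thus "x + y \<in> pi ` A" using subgrp_add[OF sA] piadd by (metis image_eqI)
  next
    fix x assume "x \<in> pi ` A"
    then obtain a where "a \<in> A" "x = pi a" by blast
    thus "- x \<in> pi ` A" using subgrp_neg[OF sA] pineg by (metis image_eqI)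
  qed
  have PB: "pi ` A \<inter> B = {0}"
  proof
    show "pi ` A \<inter> B \<subseteq> {0}"
    proof
      fix x assume "x \<in> pi ` A \<inter> B"
      then obtain a where "a \<in> A" "x = pi a" "pi a \<in> B" by blast
      hence "a = 0" using S0 by blast
      thus "x \<in> {0}" using \<open>x = pi a\<close> pi0 by simp
    qed
    show "{0} \<subseteq> pi ` A \<inter> B" using sP sB subgrp_0 by blast
  qed
  have decomp: "\<exists>a\<in>A. x - pi a \<in> B" for x
  proof -
    obtain a where a: "a \<in> A" "pA x = a - psi a" using surj[OF pAA] by blast
    have e: "x - pi a = (x - pA x) + ((a - pi a) - pA (a - pi a))" using a(2) unfolding psi_def by simp
    have "(x - pA x) + ((a - pi a) - pA (a - pi a)) \<in> B" using subgrp_add[OF sB pAB pAB] .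
    hence "x - pi a \<in> B" by (rule mem_eq) (rule e[symmetric])
    thus ?thesis using a(1) by blast
  qed
  have G: "int_direct_sum UNIV (pi ` A) B"
    unfolding int_direct_sum_def
  proof (intro conjI sP sB PB)
    show "sumset (pi ` A) B = UNIV"
    proof (rule set_eqI, rule iffI)
      fix x assume "x \<in> (UNIV :: 'a set)"
      obtain a where a: "a \<in> A" "x - pi a \<in> B" using decomp by blast
      have "x = pi a + (x - pi a)" by simp
      thus "x \<in> sumset (pi ` A) B" unfolding sumset_def using a by blast
    qed simp
  qed
  have Hd: "int_direct_sum H (pi ` A) (H \<inter> B)"
    unfolding int_direct_sum_def
  proof (intro conjI sP)
    show "subgrp (H \<inter> B)" using sH sB unfolding subgrp_def by auto
    show "pi ` A \<inter> (H \<inter> B) = {0}" using PB sH subgrp_0 by blast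
    show "sumset (pi ` A) (H \<inter> B) = H"
    proof (rule set_eqI, rule iffI)
      fix x assume "x \<in> sumset (pi ` A) (H \<inter> B)"
      thus "x \<in> H" unfolding sumset_def using subgrp_add[OF sH] piH by blast
    next
      fix x assume x: "x \<in> H"
      obtain a where a: "a \<in> A" "x - pi a \<in> B" using decomp by blast
      have "x - pi a \<in> H" using subgrp_diff[OF sH x piH] .
      moreover have "x = pi a + (x - pi a)" by simp
      ultimately show "x \<in> sumset (pi ` A) (H \<inter> B)" unfolding sumset_def using a by blast
    qed
  qed
  show ?thesis using inj G Hd unfolding direct_summand_def pi_def by blast
qed

end
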